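(* For every $r\ge3$, \[K_{A_r}(2\tilde\alpha_{A_r})=K_{C_r}(\tilde\alpha_{C_r}),\] where $2\tilde\alpha_{A_r}=2\varepsilon_1-2\varepsilon_{r+1}\in\mathbb{R}^{r+1}$ and $\tilde\alpha_{C_r}=2\varepsilon_1\in\mathbb{R}^r$.
   Context: $\Phi^+_{A_r}=\{\varepsilon_i-\varepsilon_j:1\le i<j\le r+1\}\subset\mathbb{R}^{r+1}$ and $\Phi^+_{C_r}=\{\varepsilon_i\pm\varepsilon_j:1\le i<j\le r\}\cup\{2\varepsilon_i:1\le i\le r\}\subset\mathbb{R}^r$. For a root system $X$, $K_X(\mu)$ is the number of finite multisets of elements of $\Phi^+_X$ summing to $\mu$. *)

theory Defs
  imports Complex_Main "HOL-Library.Multiset" "HOL-Library.Function_Algebras"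
begin

text \<open>Vectors of R^n are modelled as functions nat => real, coordinate k for 1 <= k <= n
  (all other coordinates are zero). eps i is the i-th standard basis vector.\<close>

definition eps :: "nat \<Rightarrow> (nat \<Rightarrow> real)" where
  "eps i = (\<lambda>k. if k = i then 1 else 0)"

definition posroots_A :: "nat \<Rightarrow> (nat \<Rightarrow> real) set" where
  "posroots_A r = {eps i - eps j | i j. 1 \<le> i \<and> i < j \<and> j \<le> r + 1}"

definition posroots_C :: "nat \<Rightarrow> (nat \<Rightarrow> real) set" where
  "posroots_C r =
     {eps i - eps j | i j. 1 \<le> i \<and> i < j \<and> j \<le> r}
   \<union> {eps i + eps j | i j. 1 \<le> i \<and> i < j \<and> j \<le> r}
   \<union> {eps i + eps i | i. 1 \<le> i \<and> i \<le> r}"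

definition kostant :: "(nat \<Rightarrow> real) set \<Rightarrow> (nat \<Rightarrow> real) \<Rightarrow> nat" where
  "kostant Phi mu = card {M :: (nat \<Rightarrow> real) multiset. set_mset M \<subseteq> Phi \<and> sum_mset M = mu}"

end

theory Submission
  imports Defs
begin

lemma eps_apply[simp]: "eps i k = (if k = i then 1 else 0)"
  by (simp add: eps_def)

lemma sum_mset_apply: "(sum_mset M :: nat \<Rightarrow> real) k = sum_mset (image_mset (\<lambda>v. v k) M)"
  by (induction M) auto

lemma sum_mset_const:
  "(\<forall>v\<in>#N. f v = (c::real)) \<Longrightarrow> sum_mset (image_mset f N) = of_nat (size N) * c"
  by (induction N) (auto simp: algebra_simps)

definition phi :: "nat \<Rightarrow> (nat \<Rightarrow> real) \<Rightarrow> real" where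
  "phi r v = (\<Sum>k\<in>{1..r}. v k)"

lemma phi_sum: "phi r (sum_mset M) = sum_mset (image_mset (phi r) M)"
  by (induction M) (auto simp: phi_def sum.distrib)

lemma phi_eps: "phi r (eps i) = (if 1 \<le> i \<and> i \<le> r then 1 else 0)"
  by (simp add: phi_def)

lemma phi_diff: "phi r (v - w) = phi r v - phi r w"
  by (simp add: phi_def sum_subtractf)

lemma phi_add: "phi r (v + w) = phi r v + phi r w"
  by (simp add: phi_def sum.distrib)

definition Dr :: "nat \<Rightarrow> (nat \<Rightarrow> real) set" where
  "Dr r = {eps i - eps j | i j. 1 \<le> i \<and> i < j \<and> j \<le> r}"

definition S :: "nat \<Rightarrow> ((nat \<Rightarrow> real) multiset \<times> nat \<times> nat) set" where
  "S r = {(M,a,b). set_mset M \<subseteq> Dr r \<and> 1 \<le> a \<and> a \<le> b \<and> b \<le> r \<and>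
          sum_mset M + eps a + eps b = eps 1 + eps 1}"

definition fA :: "nat \<Rightarrow> (nat \<Rightarrow> real) multiset \<times> nat \<times> nat \<Rightarrow> (nat \<Rightarrow> real) multiset" where
  "fA r x = (case x of (M,a,b) \<Rightarrow> M + {#eps a - eps (r+1), eps b - eps (r+1)#})"

definition fC :: "(nat \<Rightarrow> real) multiset \<times> nat \<times> nat \<Rightarrow> (nat \<Rightarrow> real) multiset" where
  "fC x = (case x of (M,a,b) \<Rightarrow> add_mset (eps a + eps b) M)"

lemma eps_diff_eq: "eps a - eps n = eps c - eps n \<Longrightarrow> a \<noteq> n \<Longrightarrow> a = c"
  by (drule fun_cong[of _ _ a]) (auto split: if_splits)

lemma eps_plus_eq: "eps a + eps b = eps c + eps d \<Longrightarrow> a \<le> b \<Longrightarrow> c \<le> d \<Longrightarrow> a = c \<and> b = d"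
  apply (frule fun_cong[of _ _ a], frule fun_cong[of _ _ b], frule fun_cong[of _ _ c], drule fun_cong[of _ _ d])
  by (auto split: if_splits)

lemma Dr_at: "v \<in> Dr r \<Longrightarrow> r < n \<Longrightarrow> v n = 0"
  by (auto simp: Dr_def)

lemma plus_notin_Dr: "eps a + eps b \<notin> Dr r"
proof
  assume "eps a + eps b \<in> Dr r"
  then obtain i j where "eps a + eps b = eps i - eps j" "i < j" by (auto simp: Dr_def)
  from fun_cong[OF this(1), of j] this(2) show False by (auto split: if_splits)
qed

lemma inj_fA_aux:
  assumes s1: "(M,a,b) \<in> S r" and s2: "(M2,a2,b2) \<in> S r" and eq: "fA r (M,a,b) = fA r (M2,a2,b2)"
  shows "M = M2 \<and> a = a2 \<and> b = b2"
proof -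
    let ?P = "\<lambda>v::nat\<Rightarrow>real. v (r+1) = 0"
  have f1: "filter_mset ?P M = M" using s1 by (auto simp: S_def filter_mset_eq_conv intro!: Dr_at)
  have f2: "filter_mset ?P M2 = M2" using s2 by (auto simp: S_def filter_mset_eq_conv intro!: Dr_at)
  have "filter_mset ?P (fA r (M,a,b)) = M" using f1 s1 by (auto simp: fA_def S_def)
  moreover have "filter_mset ?P (fA r (M2,a2,b2)) = M2" using f2 s2 by (auto simp: fA_def S_def)
  ultimately have M: "M = M2" using eq by simp
  with eq have "{#eps a - eps (r+1), eps b - eps (r+1)#} = {#eps a2 - eps (r+1), eps b2 - eps (r+1)#}"
    by (auto simp: fA_def add_mset_commute)
  then have "(eps a - eps (r+1) = eps a2 - eps (r+1) \<and> eps b - eps (r+1) = eps b2 - eps (r+1)) \<or>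
             (eps a - eps (r+1) = eps b2 - eps (r+1) \<and> eps b - eps (r+1) = eps a2 - eps (r+1))"
    by (auto simp: add_eq_conv_diff)
  moreover have "a \<noteq> r+1" "b \<noteq> r+1" using s1 by (auto simp: S_def)
  ultimately have "(a = a2 \<and> b = b2) \<or> (a = b2 \<and> b = a2)" using eps_diff_eq by metis
  then show ?thesis using M s1 s2 by (auto simp: S_def)
qed

lemma inj_fA: "inj_on (fA r) (S r)"
  by (rule inj_onI) (auto dest: inj_fA_aux)

lemma inj_fC_aux:
  assumes s1: "(M,a,b) \<in> S r" and s2: "(M2,a2,b2) \<in> S r" and eq: "fC (M,a,b) = fC (M2,a2,b2)"
  shows "M = M2 \<and> a = a2 \<and> b = b2"
proof -
    let ?P = "\<lambda>v. v \<in> Dr r"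
  have f1: "filter_mset ?P M = M" using s1 by (auto simp: S_def filter_mset_eq_conv)
  have f2: "filter_mset ?P M2 = M2" using s2 by (auto simp: S_def filter_mset_eq_conv)
  have "filter_mset ?P (fC (M,a,b)) = M" using f1 plus_notin_Dr by (simp add: fC_def)
  moreover have "filter_mset ?P (fC (M2,a2,b2)) = M2" using f2 plus_notin_Dr by (simp add: fC_def)
  ultimately have M: "M = M2" using eq by simp
  with eq have "eps a + eps b = eps a2 + eps b2" by (simp add: fC_def)
  then show ?thesis using M s1 s2 eps_plus_eq by (auto simp: S_def)
qed

lemma inj_fC: "inj_on (fC) (S r)"
  by (rule inj_onI) (auto dest: inj_fC_aux)


lemma imA:
  assumes r1: "1 \<le> r"
  shows "{M. set_mset M \<subseteq> posroots_A r \<and> sum_mset M = eps 1 + eps 1 - eps (r+1) - eps (r+1)} = fA r ` S r"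
proof
  show "fA r ` S r \<subseteq> {M. set_mset M \<subseteq> posroots_A r \<and> sum_mset M = eps 1 + eps 1 - eps (r+1) - eps (r+1)}"
  proof
    fix x assume "x \<in> fA r ` S r"
    then obtain M a b where s: "(M,a,b) \<in> S r" and x: "x = fA r (M,a,b)" by auto
    then have h: "sum_mset M + eps a + eps b = eps 1 + eps 1" and ab: "1 \<le> a" "a \<le> b" "b \<le> r"
      and MD: "set_mset M \<subseteq> Dr r" by (auto simp: S_def)
    have "Dr r \<subseteq> posroots_A r" unfolding Dr_def posroots_A_def by force
    moreover have "eps a - eps (r+1) \<in> posroots_A r" "eps b - eps (r+1) \<in> posroots_A r"
      unfolding posroots_A_def using ab by force+
    ultimately have "set_mset (fA r (M,a,b)) \<subseteq> posroots_A r" using MD by (auto simp: fA_def)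
    moreover have "sum_mset (fA r (M,a,b)) = (sum_mset M + eps a + eps b) - eps (r+1) - eps (r+1)"
      by (simp add: fA_def algebra_simps)
    ultimately show "x \<in> {M. set_mset M \<subseteq> posroots_A r \<and> sum_mset M = eps 1 + eps 1 - eps (r+1) - eps (r+1)}"
      using h x by simp
  qed
next
  show "{M. set_mset M \<subseteq> posroots_A r \<and> sum_mset M = eps 1 + eps 1 - eps (r+1) - eps (r+1)} \<subseteq> fA r ` S r"
  proof clarify
    fix M assume MA: "set_mset M \<subseteq> posroots_A r" and sM: "sum_mset M = eps 1 + eps 1 - eps (r+1) - eps (r+1)"
    define M' where "M' = filter_mset (\<lambda>v. v (r+1) = 0) M"
    define N where "N = filter_mset (\<lambda>v. \<not> v (r+1) = 0) M"
    have MN: "M = M' + N" unfolding M'_def N_def by (rule multiset_partition)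
    have M'D: "set_mset M' \<subseteq> Dr r"
    proof
      fix v assume "v \<in># M'"
      then have "v \<in> posroots_A r" "v (r+1) = 0" using MA by (auto simp: M'_def)
      then show "v \<in> Dr r" unfolding posroots_A_def Dr_def
        by (auto split: if_splits) (metis le_Suc_eq)
    qed
    have Nform: "\<exists>i. 1 \<le> i \<and> i \<le> r \<and> v = eps i - eps (r+1)" if "v \<in># N" for v
    proof -
      from that have "v \<in> posroots_A r" "v (r+1) \<noteq> 0" using MA by (auto simp: N_def)
      then show ?thesis unfolding posroots_A_def
        by (auto split: if_splits)
    qed
    have Nval: "\<forall>v\<in>#N. v (r+1) = -1" using Nform by fastforce
    have M'val: "\<forall>v\<in>#M'. v (r+1) = 0" by (auto simp: M'_def)
    have "sum_mset M (r+1) = -2" using sM r1 by simp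
    also have "sum_mset M (r+1) = sum_mset (image_mset (\<lambda>v. v (r+1)) M') + sum_mset (image_mset (\<lambda>v. v (r+1)) N)"
      unfolding sum_mset_apply MN by simp
    also have "\<dots> = of_nat (size N) * (-1)"
      using sum_mset_const[OF M'val] sum_mset_const[OF Nval] by simp
    finally have "size N = 2" by linarith
    then obtain x y where Nxy: "N = {#x, y#}"
      by (metis numeral_2_eq_2 size_mset_SucE size_1_singleton_mset One_nat_def add_mset_add_single union_commute)
    obtain a where a: "1 \<le> a" "a \<le> r" "x = eps a - eps (r+1)" using Nform Nxy by auto
    obtain b where b: "1 \<le> b" "b \<le> r" "y = eps b - eps (r+1)" using Nform Nxy by auto
    have "sum_mset M = sum_mset M' + eps a + eps b - eps (r+1) - eps (r+1)"
      using MN Nxy a b by (simp add: algebra_simps)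
    then have hs: "sum_mset M' + eps a + eps b = eps 1 + eps 1" using sM by simp
    show "M \<in> fA r ` S r"
    proof (cases "a \<le> b")
      case True
      then have "(M',a,b) \<in> S r" using hs a b M'D by (auto simp: S_def)
      moreover have "M = fA r (M',a,b)" using MN Nxy a b by (simp add: fA_def)
      ultimately show ?thesis by blast
    next
      case False
      then have "(M',b,a) \<in> S r" using hs a b M'D by (auto simp: S_def algebra_simps)
      moreover have "M = fA r (M',b,a)" using MN Nxy a b by (simp add: fA_def add_mset_commute)
      ultimately show ?thesis by blast
    qed
  qed
qed


lemma imC:
  assumes r1: "1 \<le> r"
  shows "{M. set_mset M \<subseteq> posroots_C r \<and> sum_mset M = eps 1 + eps 1} = fC ` S r"
proof
  show "fC ` S r \<subseteq> {M. set_mset M \<subseteq> posroots_C r \<and> sum_mset M = eps 1 + eps 1}"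
  proof
    fix x assume "x \<in> fC ` S r"
    then obtain M a b where s: "(M,a,b) \<in> S r" and x: "x = fC (M,a,b)" by auto
    then have h: "sum_mset M + eps a + eps b = eps 1 + eps 1" and ab: "1 \<le> a" "a \<le> b" "b \<le> r"
      and MD: "set_mset M \<subseteq> Dr r" by (auto simp: S_def)
    have "Dr r \<subseteq> posroots_C r" unfolding Dr_def posroots_C_def by blast
    moreover have "eps a + eps b \<in> posroots_C r"
    proof (cases "a = b")
      case True then show ?thesis unfolding posroots_C_def using ab by blast
    next
      case False then show ?thesis unfolding posroots_C_def using ab
        by (smt (verit, best) CollectI UnI1 UnI2 le_neq_implies_less)
    qed
    ultimately have "set_mset x \<subseteq> posroots_C r" using MD x by (auto simp: fC_def)
    moreover have "sum_mset x = sum_mset M + eps a + eps b" using x by (simp add: fC_def algebra_simps)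
    ultimately show "x \<in> {M. set_mset M \<subseteq> posroots_C r \<and> sum_mset M = eps 1 + eps 1}"
      using h by simp
  qed
next
  show "{M. set_mset M \<subseteq> posroots_C r \<and> sum_mset M = eps 1 + eps 1} \<subseteq> fC ` S r"
  proof clarify
    fix M assume MC: "set_mset M \<subseteq> posroots_C r" and sM: "sum_mset M = eps 1 + eps 1"
    define M' where "M' = filter_mset (\<lambda>v. v \<in> Dr r) M"
    define N where "N = filter_mset (\<lambda>v. \<not> v \<in> Dr r) M"
    have MN: "M = M' + N" unfolding M'_def N_def by (rule multiset_partition)
    have M'D: "set_mset M' \<subseteq> Dr r" by (auto simp: M'_def)
    have Nform: "\<exists>a b. 1 \<le> a \<and> a \<le> b \<and> b \<le> r \<and> v = eps a + eps b" if "v \<in># N" for v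
    proof -
      from that have "v \<in> posroots_C r" "v \<notin> Dr r" using MC by (auto simp: N_def)
      then show ?thesis unfolding posroots_C_def Dr_def
        apply (auto simp del: eps_apply)
        subgoal for i j using less_imp_le by blast
        subgoal for i by (metis mult_2 order_refl)
        done
    qed
    have Nval: "\<forall>v\<in>#N. phi r v = 2" using Nform by (fastforce simp: phi_add phi_eps simp del: eps_apply)
    have M'val: "\<forall>v\<in>#M'. phi r v = 0" using M'D
      by (fastforce simp: Dr_def phi_diff phi_eps simp del: eps_apply)
    have "phi r (sum_mset M) = phi r (eps 1) + phi r (eps 1)" using sM phi_add by metis
    then have "phi r (sum_mset M) = 2" using r1 by (simp add: phi_eps del: eps_apply)
    also have "phi r (sum_mset M) = sum_mset (image_mset (phi r) M') + sum_mset (image_mset (phi r) N)"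
      unfolding phi_sum MN by simp
    also have "\<dots> = of_nat (size N) * 2"
      using sum_mset_const[OF M'val] sum_mset_const[OF Nval] by simp
    finally have "size N = 1" by linarith
    then obtain p where Np: "N = {#p#}" using size_1_singleton_mset by blast
    obtain a b where ab: "1 \<le> a" "a \<le> b" "b \<le> r" "p = eps a + eps b" using Nform Np by force
    have "sum_mset M = sum_mset M' + eps a + eps b"
      using MN Np ab by (simp add: algebra_simps)
    then have hs: "sum_mset M' + eps a + eps b = eps 1 + eps 1" using sM by simp
    have "(M',a,b) \<in> S r" using hs ab M'D by (auto simp: S_def)
    moreover have "M = fC (M',a,b)" using MN Np ab by (simp add: fC_def)
    ultimately show "M \<in> fC ` S r" by blast
  qed
qed

theorem mainTheorem15:
  fixes r :: nat
  assumes "r \<ge> 3"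
  shows "kostant (posroots_A r) (eps 1 + eps 1 - eps (r + 1) - eps (r + 1))
       = kostant (posroots_C r) (eps 1 + eps 1)"
proof -
  have r1: "1 \<le> r" using assms by simp
  have "kostant (posroots_A r) (eps 1 + eps 1 - eps (r + 1) - eps (r + 1)) = card (fA r ` S r)"
    unfolding kostant_def imA[OF r1] ..
  also have "\<dots> = card (S r)" by (rule card_image[OF inj_fA])
  also have "\<dots> = card (fC ` S r)" by (rule card_image[OF inj_fC, symmetric])
  also have "\<dots> = kostant (posroots_C r) (eps 1 + eps 1)"
    unfolding kostant_def imC[OF r1] ..
  finally show ?thesis .
qed

end
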